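(* For $N\ge1$ let $G_N(z,w)=2\sqrt2\sum_{k=0}^{N-1}\sum_{\ell=0}^k\frac{(2k+3)(2\ell+2)}{(2k+4)!!(2\ell+3)!!}(\sqrt2z)^{2k+1}(\sqrt2w)^{2\ell}$, $\varkappa_N(z,w)=G_N(z,w)-G_N(w,z)$ (the skew-kernel for the weight $(1+|z|^2)e^{-2|z|^2}$), and $\widehat\varkappa_N(z,w)=(zw)^3\varkappa_N(z,w)$. Then $$\big[z\partial_z^2-(2z^2+2)\partial_z-2z\big]\widehat\varkappa_N(z,w)=4(zw)^3\sum_{k=0}^{2N-1}\frac{(2zw)^k}{k!}-\frac12\frac{(2N+1)(2N+3)}{(2N+2)!!}(\sqrt2z)^{2N+3}\sum_{\ell=0}^{N-1}\frac{2\ell+2}{(2\ell+3)!!}(\sqrt2w)^{2\ell+3}.$$ Moreover, as $N\to\infty$, $\varkappa_N(z,w)$ converges uniformly for $z,w$ in compact subsets of $\mathbb{C}$ to $$\frac{\sqrt\pi}{4}\frac{(2z^2-1)(2w^2-1)}{(zw)^3}e^{z^2+w^2}\big(\operatorname{erf}(z-w)+\operatorname{erf}(w)-\operatorname{erf}(z)\big)-\frac{z(2w^2-1)}{2(zw)^3}e^{w^2}+\frac{w(2z^2-1)}{2(zw)^3}e^{z^2}-\frac{z-w}{2(zw)^3}e^{2zw}.$$ *)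

theory Defs
  imports "HOL-Complex_Analysis.Complex_Analysis"
begin

fun dfact :: "nat \<Rightarrow> nat" where
  "dfact 0 = 1"
| "dfact (Suc 0) = 1"
| "dfact (Suc (Suc n)) = Suc (Suc n) * dfact n"

definition cerf :: "complex \<Rightarrow> complex" where
  "cerf z = (2 / complex_of_real (sqrt pi)) *
     contour_integral (linepath 0 z) (\<lambda>t. exp (- (t^2)))"

definition GN :: "nat \<Rightarrow> complex \<Rightarrow> complex \<Rightarrow> complex" where
  "GN N z w = 2 * complex_of_real (sqrt 2) *
     (\<Sum>k<N. \<Sum>l\<le>k.
        of_nat ((2*k+3) * (2*l+2)) / of_nat (dfact (2*k+4) * dfact (2*l+3))
        * (complex_of_real (sqrt 2) * z) ^ (2*k+1)
        * (complex_of_real (sqrt 2) * w) ^ (2*l))"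

definition kappaN :: "nat \<Rightarrow> complex \<Rightarrow> complex \<Rightarrow> complex" where
  "kappaN N z w = GN N z w - GN N w z"

definition kappahatN :: "nat \<Rightarrow> complex \<Rightarrow> complex \<Rightarrow> complex" where
  "kappahatN N z w = (z * w) ^ 3 * kappaN N z w"

text \<open>The claimed limit kernel (formula valid for z w \<noteq> 0).\<close>
definition kappa_lim :: "complex \<Rightarrow> complex \<Rightarrow> complex" where
  "kappa_lim z w =
     complex_of_real (sqrt pi) / 4 * ((2*z^2 - 1) * (2*w^2 - 1)) / (z*w)^3
       * exp (z^2 + w^2) * (cerf (z - w) + cerf w - cerf z)
     - z * (2*w^2 - 1) / (2 * (z*w)^3) * exp (w^2)
     + w * (2*z^2 - 1) / (2 * (z*w)^3) * exp (z^2)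
     - (z - w) / (2 * (z*w)^3) * exp (2*z*w)"

end

theory Submission
  imports Defs
begin


lemma dfact_SS: "dfact (n+2) = (n+2) * dfact n"
  by (simp add: numeral_2_eq_2)

lemma dfact_pos: "dfact n > 0"
  by (induction n rule: dfact.induct) auto

lemma dfact_fact: "dfact (Suc n) * dfact n = fact (Suc n)"
  by (induction n) (auto simp: algebra_simps)

lemma dfact_even: "dfact (2*n) = 2^n * fact n"
proof (induction n)
  case (Suc n)
  have "dfact (2*Suc n) = (2*n+2) * dfact (2*n)" using dfact_SS[of "2*n"] by simp
  then show ?case using Suc by (simp add: algebra_simps)
qed simp

lemma dfact_odd_bound: "(2*l+2)*2^l \<le> dfact(2*l+3)"
proof (induction l)
  case 0 then show ?case by (simp add: numeral_3_eq_3)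
next
  case (Suc l)
  have e: "dfact (2*Suc l+3) = (2*l+5) * dfact (2*l+3)"
    using dfact_SS[of "2*l+3"] by (simp add: algebra_simps)
  have le1: "(2*Suc l+2)*2^Suc l \<le> (2*l+5) * ((2*l+2)*2^l)"
    by (simp add: algebra_simps)
  have le2: "(2*l+5) * ((2*l+2)*2^l) \<le> (2*l+5) * dfact (2*l+3)"
    using Suc by simp
  show ?case unfolding e by (rule order_trans[OF le1 le2])
qed

definition cc :: "nat \<Rightarrow> nat \<Rightarrow> complex" where
  "cc k l = of_nat ((2*k+3)*(2*l+2)*2^(k+l+2)) / of_nat (dfact (2*k+4) * dfact (2*l+3))"

lemma sqrt2_pow_even: "(complex_of_real (sqrt 2)) ^ (2*n) = 2^n"
proof -
  have "(complex_of_real (sqrt 2))^2 = 2"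
    by (metis of_real_numeral of_real_power real_sqrt_pow2 zero_le_numeral)
  then show ?thesis by (simp add: power_mult)
qed


lemma GN_term: "2 * complex_of_real (sqrt 2) * (of_nat ((2*k+3)*(2*l+2)) / of_nat (dfact (2*k+4) * dfact (2*l+3))
        * (complex_of_real (sqrt 2) * z)^(2*k+1) * (complex_of_real (sqrt 2) * w)^(2*l)) = cc k l * z^(2*k+1) * w^(2*l)"
proof -
  define s where "s = complex_of_real (sqrt 2)"
  have s2: "s * s = 2" unfolding s_def of_real_mult[symmetric] by simp
  have a: "(s * z)^(2*k+1) = 2^k * s * z^(2*k+1)"
    unfolding s_def by (simp add: power_mult_distrib sqrt2_pow_even)
  have b: "(s * w)^(2*l) = 2^l * w^(2*l)"
    unfolding s_def by (simp add: power_mult_distrib sqrt2_pow_even)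
  define q where "q = (of_nat ((2*k+3)*(2*l+2)) / of_nat (dfact (2*k+4) * dfact (2*l+3)) :: complex)"
  have c: "cc k l = 4 * 2^k * 2^l * q"
    unfolding cc_def q_def of_nat_mult of_nat_power power_add by simp
  have "2 * s * (q * (s * z)^(2*k+1) * (s * w)^(2*l)) = (s * s) * (2 * 2^k * 2^l * q) * z^(2*k+1) * w^(2*l)"
    unfolding a b by (simp only: mult_ac)
  also have "\<dots> = cc k l * z^(2*k+1) * w^(2*l)"
    unfolding c s2 by simp
  finally show ?thesis unfolding s_def q_def .
qed

lemma GN_alt: "GN N z w = (\<Sum>k<N. \<Sum>l\<le>k. cc k l * z^(2*k+1) * w^(2*l))"
  unfolding GN_def sum_distrib_left GN_term ..


lemma pw_split: "m = a + b \<Longrightarrow> (x::'a::monoid_mult)^m = x^a * x^b"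
  by (simp add: power_add)

lemma kappahat_term: "(z*w)^3 * (cc k l * z^(2*k+1) * w^(2*l) - cc k l * w^(2*k+1) * z^(2*l))
   = cc k l * (w^(2*l+3) * z^(2*k+4) - w^(2*k+4) * z^(2*l+3))"
proof -
  have e1: "z^(2*k+4) = z^(2*k+1) * z^3" "w^(2*k+4) = w^(2*k+1) * w^3"
       "z^(2*l+3) = z^(2*l) * z^3" "w^(2*l+3) = w^(2*l) * w^3"
    by (rule pw_split, simp)+
  show ?thesis unfolding e1 power_mult_distrib by (simp add: algebra_simps)
qed

lemma kappahat_alt: "kappahatN N z w =
   (\<Sum>k<N. \<Sum>l\<le>k. cc k l * (w^(2*l+3) * z^(2*k+4) - w^(2*k+4) * z^(2*l+3)))"
  unfolding kappahatN_def kappaN_def GN_alt sum_subtractf[symmetric] sum_distrib_left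
  by (simp only: kappahat_term)

lemma Dmon: "n = m + 1 \<Longrightarrow> ((\<lambda>z::complex. z^n) has_field_derivative (of_nat n * z^m)) (at z)"
  using DERIV_power[OF DERIV_ident, of "m+1" z] by simp

definition F1 :: "nat \<Rightarrow> complex \<Rightarrow> complex \<Rightarrow> complex" where
  "F1 N w z = (\<Sum>k<N. \<Sum>l\<le>k. cc k l * (w^(2*l+3) * (of_nat (2*k+4) * z^(2*k+3))
                                        - w^(2*k+4) * (of_nat (2*l+3) * z^(2*l+2))))"
definition F2 :: "nat \<Rightarrow> complex \<Rightarrow> complex \<Rightarrow> complex" where
  "F2 N w z = (\<Sum>k<N. \<Sum>l\<le>k. cc k l * (w^(2*l+3) * (of_nat (2*k+4) * (of_nat (2*k+3) * z^(2*k+2)))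
                                        - w^(2*k+4) * (of_nat (2*l+3) * (of_nat (2*l+2) * z^(2*l+1)))))"

lemma hasD1: "((\<lambda>z. kappahatN N z w) has_field_derivative F1 N w z) (at z)"
  unfolding kappahat_alt F1_def
  apply (rule DERIV_sum)
  apply (rule DERIV_sum)
  apply (rule DERIV_cmult)
  apply (rule DERIV_diff)
   apply (rule DERIV_cmult, rule Dmon, simp)
  apply (rule DERIV_cmult, rule Dmon, simp)
  done

lemma hasD2: "((\<lambda>z. F1 N w z) has_field_derivative F2 N w z) (at z)"
  unfolding F1_def F2_def
  apply (rule DERIV_sum)
  apply (rule DERIV_sum)
  apply (rule DERIV_cmult)
  apply (rule DERIV_diff)
   apply (rule DERIV_cmult, rule DERIV_cmult, rule Dmon, simp)
  apply (rule DERIV_cmult, rule DERIV_cmult, rule Dmon, simp)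
  done

lemma deriv1: "deriv (\<lambda>z. kappahatN N z w) = F1 N w"
  by (rule ext, rule DERIV_imp_deriv, rule hasD1)

lemma deriv2: "deriv (\<lambda>z. deriv (\<lambda>z. kappahatN N z w) z) = F2 N w"
  unfolding deriv1 by (rule ext, rule DERIV_imp_deriv, rule hasD2)

lemma pw5: "(z::complex)^5 = z*z*z*z*z" "z^4 = z*z*z*z" "z^3 = z*z*z" "z^2 = z*z"
  by (simp_all add: eval_nat_numeral)

lemma Lmon1: "(z::complex) * (of_nat (2*k+4) * (of_nat (2*k+3) * z^(2*k+2)))
   - (2*z^2+2) * (of_nat (2*k+4) * z^(2*k+3)) - 2*z*z^(2*k+4)
   = of_nat ((2*k+4)*(2*k+1)) * z^(2*k+3) - of_nat (2*(2*k+5)) * z^(2*k+5)"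
  by (simp add: power_add pw5 algebra_simps)

lemma Lmon2: "(z::complex) * (of_nat (2*l+3) * (of_nat (2*l+2) * z^(2*l+1)))
   - (2*z^2+2) * (of_nat (2*l+3) * z^(2*l+2)) - 2*z*z^(2*l+3)
   = of_nat ((2*l+3)*(2*l)) * z^(2*l+2) - of_nat (2*(2*l+4)) * z^(2*l+4)"
  by (simp add: power_add pw5 algebra_simps)

definition TL :: "nat \<Rightarrow> complex \<Rightarrow> complex \<Rightarrow> complex" where
  "TL N z w = (\<Sum>k<N. \<Sum>l\<le>k. cc k l * (w^(2*l+3) * (of_nat ((2*k+4)*(2*k+1)) * z^(2*k+3) - of_nat (2*(2*k+5)) * z^(2*k+5))
       - w^(2*k+4) * (of_nat ((2*l+3)*(2*l)) * z^(2*l+2) - of_nat (2*(2*l+4)) * z^(2*l+4))))"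

lemma L_term: "z * (cc k l * (w^(2*l+3) * (of_nat (2*k+4) * (of_nat (2*k+3) * z^(2*k+2)))
                                        - w^(2*k+4) * (of_nat (2*l+3) * (of_nat (2*l+2) * z^(2*l+1)))))
  - (2*z^2+2) * (cc k l * (w^(2*l+3) * (of_nat (2*k+4) * z^(2*k+3))
                                        - w^(2*k+4) * (of_nat (2*l+3) * z^(2*l+2))))
  - 2*z*(cc k l * (w^(2*l+3) * z^(2*k+4) - w^(2*k+4) * z^(2*l+3)))
  = cc k l * (w^(2*l+3) * (of_nat ((2*k+4)*(2*k+1)) * z^(2*k+3) - of_nat (2*(2*k+5)) * z^(2*k+5))
       - w^(2*k+4) * (of_nat ((2*l+3)*(2*l)) * z^(2*l+2) - of_nat (2*(2*l+4)) * z^(2*l+4)))" (is "?L = ?RHS")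
proof -
  have "?L = cc k l * (w^(2*l+3) * ((z * (of_nat (2*k+4) * (of_nat (2*k+3) * z^(2*k+2)))
   - (2*z^2+2) * (of_nat (2*k+4) * z^(2*k+3)) - 2*z*z^(2*k+4)))
   - w^(2*k+4) * ((z * (of_nat (2*l+3) * (of_nat (2*l+2) * z^(2*l+1)))
   - (2*z^2+2) * (of_nat (2*l+3) * z^(2*l+2)) - 2*z*z^(2*l+3))))" (is "_ = ?R")
    by (simp only: algebra_simps)
  also have "?R = ?RHS" unfolding Lmon1 Lmon2 ..
  finally show ?thesis .
qed

lemma Lop_kappahat: "z * deriv (\<lambda>z. deriv (\<lambda>z. kappahatN N z w) z) z
            - (2*z^2 + 2) * deriv (\<lambda>z. kappahatN N z w) z
            - 2 * z * kappahatN N z w = TL N z w"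
  unfolding deriv2
  unfolding deriv1
  unfolding F1_def F2_def TL_def kappahat_alt sum_distrib_left sum_subtractf[symmetric]
  by (simp only: L_term)


definition rho :: "nat \<Rightarrow> nat \<Rightarrow> complex" where
  "rho N l = of_nat ((2*N+1)*(2*N+3)*(2*l+2)*2^(N+l+2)) / of_nat (dfact (2*N+2) * dfact (2*l+3))"

lemma dfact_nz: "dfact n \<noteq> 0" using dfact_pos[of n] by simp

lemma castq: "b \<noteq> 0 \<Longrightarrow> d \<noteq> 0 \<Longrightarrow> a*c*d = e*b \<Longrightarrow>
   (of_nat a / of_nat b :: complex) * of_nat c = of_nat e / of_nat d"
proof -
  assume b: "b \<noteq> 0" and d: "d \<noteq> 0" and h: "a*c*d = e*b"
  have "(of_nat a / of_nat b :: complex) * of_nat c = of_nat (a*c) / of_nat b" by simp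
  also have "\<dots> = of_nat e / of_nat d"
    using b d by (simp add: frac_eq_eq of_nat_mult[symmetric] h del: of_nat_mult)
  finally show ?thesis .
qed

lemma casteq: "b \<noteq> 0 \<Longrightarrow> d \<noteq> 0 \<Longrightarrow> a*d = e*b \<Longrightarrow>
   (of_nat a / of_nat b :: complex) = of_nat e / of_nat d"
  using castq[of b d a 1 e] by simp

lemma dSS: "m = n + 2 \<Longrightarrow> dfact m = m * dfact n"
  by (simp only:) (rule dfact_SS)

lemma dF: "m = Suc n \<Longrightarrow> dfact m * dfact n = fact m"
  by (simp only:) (rule dfact_fact)

lemma fS: "m = Suc n \<Longrightarrow> (fact m :: nat) = m * fact n"
  by (simp only: fact_Suc of_nat_id)

lemma d4: "dfact (2*N+4) = (2*N+4) * dfact (2*N+2)"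
  by (rule dSS) simp

lemma d5: "dfact (2*l+5) = (2*l+5) * dfact (2*l+3)"
  by (rule dSS) simp

lemma f3: "dfact (2*N+2) * dfact (2*N+3) = (2*N+3)*(2*N+2)*(2*N+1)*fact (2*N)"
proof -
  have "dfact (2*N+2) * dfact (2*N+3) = dfact (2*N+3) * dfact (2*N+2)" by (rule mult.commute)
  also have "\<dots> = fact (2*N+3)" by (rule dF) simp
  also have "\<dots> = (2*N+3) * fact (2*N+2)" by (rule fS) simp
  also have "fact (2*N+2) = (2*N+2) * (fact (2*N+1) :: nat)" by (rule fS) simp
  also have "fact (2*N+1) = (2*N+1) * (fact (2*N) :: nat)" by (rule fS) simp
  finally show ?thesis by (simp only: mult_ac)
qed

lemma f4: "dfact (2*N+4) * dfact (2*N+3) = (2*N+4)*(2*N+3)*(2*N+2)*fact (2*N+1)"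
proof -
  have "dfact (2*N+4) * dfact (2*N+3) = fact (2*N+4)"
    by (rule dF) simp
  also have "\<dots> = (2*N+4) * fact (2*N+3)" by (rule fS) simp
  also have "fact (2*N+3) = (2*N+3) * (fact (2*N+2) :: nat)" by (rule fS) simp
  also have "fact (2*N+2) = (2*N+2) * (fact (2*N+1) :: nat)" by (rule fS) simp
  finally show ?thesis by (simp only: mult_ac)
qed

lemma c1: "cc N l * of_nat ((2*N+4)*(2*N+1)) = rho N l"
  unfolding cc_def rho_def
  apply (rule castq)
    apply (simp add: dfact_nz)
   apply (simp add: dfact_nz)
  apply (unfold d4)
  apply (simp only: mult_ac)
  done

lemma c3: "cc N l * of_nat (2*(2*N+5)) = rho (Suc N) l"
proof -
  have e: "2*Suc N+1 = 2*N+3" "2*Suc N+3 = 2*N+5" "2*Suc N+2 = 2*N+4"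
     "(2::nat)^(Suc N+l+2) = 2*2^(N+l+2)" by simp_all
  show ?thesis
    unfolding cc_def rho_def e
    apply (rule castq)
      apply (simp add: dfact_nz)
     apply (simp add: dfact_nz)
    apply (simp only: mult_ac)
    done
qed

lemma c4: "cc N (Suc l) * of_nat ((2*Suc l+3)*(2*Suc l)) = cc N l * of_nat (2*(2*l+4))"
proof -
  have e: "2*Suc l = 2*l+2"
     "(2::nat)^(N+Suc l+2) = 2*2^(N+l+2)" by simp_all
  have e2: "2*l+2+2 = 2*l+4" "2*l+2+3 = 2*l+5" by simp_all
  have "cc N (Suc l) * of_nat ((2*Suc l+3)*(2*Suc l)) =
     of_nat ((2*N+3)*(2*l+2)*2^(N+l+2)*(2*(2*l+4))) / of_nat (dfact (2*N+4) * dfact (2*l+3))"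
    unfolding cc_def e e2
    apply (rule castq)
      apply (simp add: dfact_nz)
     apply (simp add: dfact_nz)
    apply (unfold d5)
    apply (simp only: mult_ac)
    done
  also have "\<dots> = cc N l * of_nat (2*(2*l+4))"
    unfolding cc_def
    apply (rule sym, rule castq)
      apply (simp add: dfact_nz)
     apply (simp add: dfact_nz)
    apply (simp only: mult_ac)
    done
  finally show ?thesis .
qed

lemma p4: "(2::nat)^(N+N+2) = 4*2^(2*N)"
  by (simp add: power_add flip: mult_2)

lemma p8: "(4::nat)*2^(2*N+1) = 2*(4*2^(2*N))"
  by (simp add: power_add)

lemma c2: "rho N N = of_nat (4*2^(2*N)) / of_nat (fact (2*N))"
  unfolding rho_def
proof (rule casteq)
  show "(2*N+1)*(2*N+3)*(2*N+2)*2^(N+N+2) * fact (2*N) = 4*2^(2*N) * (dfact (2*N+2) * dfact (2*N+3))"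
    unfolding f3 p4 by (simp only: mult_ac)
qed (simp_all add: dfact_nz)

lemma c5: "cc N N * of_nat (2*(2*N+4)) = of_nat (4*2^(2*N+1)) / of_nat (fact (2*N+1))"
  unfolding cc_def
proof (rule castq)
  show "(2*N+3)*(2*N+2)*2^(N+N+2) * (2*(2*N+4)) * fact (2*N+1) = 4*2^(2*N+1) * (dfact (2*N+4) * dfact (2*N+3))"
    unfolding f4 p4 p8 by (simp only: mult_ac)
qed (simp_all add: dfact_nz)


definition termf :: "nat \<Rightarrow> nat \<Rightarrow> complex \<Rightarrow> complex \<Rightarrow> complex" where
  "termf k l z w = cc k l * (w^(2*l+3) * (of_nat ((2*k+4)*(2*k+1)) * z^(2*k+3) - of_nat (2*(2*k+5)) * z^(2*k+5))
       - w^(2*k+4) * (of_nat ((2*l+3)*(2*l)) * z^(2*l+2) - of_nat (2*(2*l+4)) * z^(2*l+4)))"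

lemma TL_termf: "TL N z w = (\<Sum>k<N. \<Sum>l\<le>k. termf k l z w)"
  unfolding TL_def termf_def ..

definition tf :: "nat \<Rightarrow> nat \<Rightarrow> complex \<Rightarrow> complex" where
  "tf N l z = cc N l * of_nat (2*(2*l+4)) * z^(2*l+4)"
definition sf :: "nat \<Rightarrow> nat \<Rightarrow> complex \<Rightarrow> complex" where
  "sf N l z = cc N l * of_nat ((2*l+3)*(2*l)) * z^(2*l+2)"

lemma termsplit: "termf N l z w = rho N l * z^(2*N+3) * w^(2*l+3) - rho (Suc N) l * z^(2*N+5) * w^(2*l+3)
   + w^(2*N+4) * (tf N l z - sf N l z)"
  unfolding termf_def tf_def sf_def c3[symmetric]
  unfolding c1[symmetric]
  by (simp add: algebra_simps)

lemma sf0: "sf N 0 z = 0" unfolding sf_def by simp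

lemma sfSuc: "sf N (Suc l) z = tf N l z"
proof -
  have e: "2*Suc l+2 = 2*l+4" by simp
  show ?thesis unfolding sf_def tf_def e c4 ..
qed

lemma tele: "(\<And>l. s (Suc l) = t l) \<Longrightarrow> s 0 = 0 \<Longrightarrow> (\<Sum>l\<le>N. t l - s l) = (t N :: 'a::ab_group_add)"
  by (induction N) (auto simp: algebra_simps)

lemma e1: "rho N N * z^(2*N+3) * w^(2*N+3) = 4*(z*w)^3*((2*z*w)^(2*N) / of_nat (fact (2*N)))"
  unfolding c2 by (simp add: power_mult_distrib power_add field_simps)

lemma e2: "w^(2*N+4) * tf N N z = 4*(z*w)^3*((2*z*w)^(2*N+1) / of_nat (fact (2*N+1)))"
proof -
  have h: "z^(2*N+4) = z^(2*N+1)*z^3" "w^(2*N+4) = w^(2*N+1)*w^3" by (rule pw_split, simp)+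
  have h2: "(2::complex)^(2*N+1) = 2*4^N"
    by (simp add: power_mult)
  have h3: "((2::complex)^N)^2 = 4^N"
    unfolding power2_eq_square power_mult_distrib[symmetric] by simp
  show ?thesis unfolding tf_def c5 h power_mult_distrib h2
    by (simp add: field_simps power_mult h3)
qed

lemma stepsum: "(\<Sum>l\<le>N. termf N l z w) =
   (\<Sum>l<N. rho N l * z^(2*N+3) * w^(2*l+3)) + 4*(z*w)^3*((2*z*w)^(2*N) / of_nat (fact (2*N)))
   - (\<Sum>l<Suc N. rho (Suc N) l * z^(2*N+5) * w^(2*l+3))
   + 4*(z*w)^3*((2*z*w)^(2*N+1) / of_nat (fact (2*N+1)))"
proof -
  have "(\<Sum>l\<le>N. termf N l z w) = (\<Sum>l\<le>N. rho N l * z^(2*N+3) * w^(2*l+3))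
     - (\<Sum>l\<le>N. rho (Suc N) l * z^(2*N+5) * w^(2*l+3)) + w^(2*N+4) * (\<Sum>l\<le>N. tf N l z - sf N l z)"
    unfolding termsplit sum.distrib sum_subtractf sum_distrib_left[symmetric] ..
  also have "(\<Sum>l\<le>N. tf N l z - sf N l z) = tf N N z"
    by (rule tele) (simp_all add: sfSuc sf0)
  also have "(\<Sum>l\<le>N. rho N l * z^(2*N+3) * w^(2*l+3)) = (\<Sum>l<N. rho N l * z^(2*N+3) * w^(2*l+3))
      + rho N N * z^(2*N+3) * w^(2*N+3)"
    unfolding lessThan_Suc_atMost[symmetric] sum.lessThan_Suc ..
  also have "(\<Sum>l\<le>N. rho (Suc N) l * z^(2*N+5) * w^(2*l+3)) = (\<Sum>l<Suc N. rho (Suc N) l * z^(2*N+5) * w^(2*l+3))"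
    unfolding lessThan_Suc_atMost ..
  finally show ?thesis unfolding e1 e2 by simp
qed

definition RHSs :: "nat \<Rightarrow> complex \<Rightarrow> complex \<Rightarrow> complex" where
  "RHSs N z w = 4*(z*w)^3 * (\<Sum>k<2*N. (2*z*w)^k / of_nat (fact k))
      - (\<Sum>l<N. rho N l * z^(2*N+3) * w^(2*l+3))"

lemma TL_RHS: "TL N z w = RHSs N z w"
proof (induction N)
  case 0 then show ?case by (simp add: TL_def RHSs_def)
next
  case (Suc N)
  have "TL (Suc N) z w = TL N z w + (\<Sum>l\<le>N. termf N l z w)"
    unfolding TL_termf by simp
  also have "\<dots> = RHSs (Suc N) z w"
  proof -
    have e: "2*Suc N+3 = 2*N+5" "2 * Suc N = Suc (Suc (2*N))" by simp_all
    show ?thesis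
      unfolding Suc stepsum RHSs_def e sum.lessThan_Suc
      by (simp add: algebra_simps)
  qed
  finally show ?case .
qed

lemma R_term: "1/2 * (of_nat ((2*N+1)*(2*N+3)) / of_nat (dfact (2*N+2)))
        * (complex_of_real (sqrt 2) * z) ^ (2*N+3)
        * (of_nat (2*l+2) / of_nat (dfact (2*l+3)) * (complex_of_real (sqrt 2) * w) ^ (2*l+3))
     = rho N l * z^(2*N+3) * w^(2*l+3)"
proof -
  define sq where "sq = complex_of_real (sqrt 2)"
  have s2: "sq * sq = 2" unfolding sq_def of_real_mult[symmetric] by simp
  have a: "(sq * z)^(2*N+3) = 2^(N+1) * sq * z^(2*N+3)"
  proof -
    have "sq^(2*N+3) = sq^(2*(N+1)) * sq^1" by (rule pw_split) simp
    then show ?thesis unfolding sq_def power_mult_distrib sqrt2_pow_even by simp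
  qed
  have b: "(sq * w)^(2*l+3) = 2^(l+1) * sq * w^(2*l+3)"
  proof -
    have "sq^(2*l+3) = sq^(2*(l+1)) * sq^1" by (rule pw_split) simp
    then show ?thesis unfolding sq_def power_mult_distrib sqrt2_pow_even by simp
  qed
  have r: "rho N l = (of_nat ((2*N+1)*(2*N+3)) / of_nat (dfact (2*N+2))) * (of_nat (2*l+2) / of_nat (dfact (2*l+3))) * 2^(N+l+2)"
    unfolding rho_def by (simp add: field_simps dfact_nz)
  have "1/2 * (of_nat ((2*N+1)*(2*N+3)) / of_nat (dfact (2*N+2))) * (sq * z) ^ (2*N+3)
        * (of_nat (2*l+2) / of_nat (dfact (2*l+3)) * (sq * w) ^ (2*l+3))
     = (of_nat ((2*N+1)*(2*N+3)) / of_nat (dfact (2*N+2))) * (of_nat (2*l+2) / of_nat (dfact (2*l+3)))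
        * (1/2 * 2^(N+1) * 2^(l+1) * (sq * sq)) * z^(2*N+3) * w^(2*l+3)"
    unfolding a b by (simp only: mult_ac)
  also have "\<dots> = rho N l * z^(2*N+3) * w^(2*l+3)"
    unfolding r s2 by (simp add: power_add)
  finally show ?thesis unfolding sq_def .
qed

lemma part1: "z * deriv (\<lambda>z. deriv (\<lambda>z. kappahatN N z w) z) z
            - (2*z^2 + 2) * deriv (\<lambda>z. kappahatN N z w) z
            - 2 * z * kappahatN N z w
          = 4 * (z*w)^3 * (\<Sum>k<2*N. (2*z*w)^k / of_nat (fact k))
            - 1/2 * (of_nat ((2*N+1) * (2*N+3)) / of_nat (dfact (2*N+2)))
              * (complex_of_real (sqrt 2) * z) ^ (2*N+3)
              * (\<Sum>l<N. of_nat (2*l+2) / of_nat (dfact (2*l+3))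
                   * (complex_of_real (sqrt 2) * w) ^ (2*l+3))"
  unfolding Lop_kappahat TL_RHS RHSs_def sum_distrib_left R_term ..


lemma cerf_prim: "\<exists>F. (\<forall>x. (F has_field_derivative exp (-(x^2))) (at x)) \<and>
   (\<forall>z. cerf z = 2 / complex_of_real (sqrt pi) * (F z - F 0))"
proof -
  have hol: "(\<lambda>t::complex. exp (-(t^2))) holomorphic_on UNIV"
    by (intro holomorphic_intros)
  show ?thesis
  proof (rule holomorphic_convex_primitive'[OF convex_UNIV open_UNIV hol])
    fix F :: "complex \<Rightarrow> complex"
    assume F: "\<And>x. x \<in> UNIV \<Longrightarrow> (F has_field_derivative exp (-(x^2))) (at x within UNIV)"
    have "cerf z = 2 / complex_of_real (sqrt pi) * (F z - F 0)" for z
    proof -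
      have "((\<lambda>t. exp (-(t^2))) has_contour_integral (F (pathfinish (linepath 0 z)) - F (pathstart (linepath 0 z)))) (linepath 0 z)"
        by (rule contour_integral_primitive[OF F]) auto
      then have "contour_integral (linepath 0 z) (\<lambda>t. exp (-(t^2))) = F z - F 0"
        by (simp add: contour_integral_unique)
      then show ?thesis unfolding cerf_def by simp
    qed
    with F show ?thesis by auto
  qed
qed

lemma cerf_facts: "(\<forall>z. (cerf has_field_derivative (2 / complex_of_real (sqrt pi) * exp (-(z^2)))) (at z))
   \<and> cerf 0 = 0 \<and> (\<forall>z. cerf (-z) = - cerf z)"
proof -
  obtain F where F: "\<And>x. (F has_field_derivative exp (-(x^2))) (at x)"
    and c: "\<And>z. cerf z = 2 / complex_of_real (sqrt pi) * (F z - F 0)"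
    using cerf_prim by blast
  have ce: "cerf = (\<lambda>z. 2 / complex_of_real (sqrt pi) * (F z - F 0))" using c by auto
  have D: "(cerf has_field_derivative (2 / complex_of_real (sqrt pi) * exp (-(z^2)))) (at z)" for z
    unfolding ce by (auto intro!: derivative_eq_intros F)
  have odd: "cerf (-z) = - cerf z" for z
  proof -
    have "((\<lambda>x. F (-x) + F x) has_field_derivative 0) (at x within UNIV)" for x
    proof -
      have m: "((\<lambda>x. -x) has_field_derivative -1) (at x)" by (auto intro!: derivative_eq_intros)
      have "((\<lambda>x. F (-x)) has_field_derivative exp (-((-x)^2)) * (-1)) (at x)"
        using DERIV_chain'[OF m F[of "-x"]] by simp
      from DERIV_add[OF this F[of x]] show ?thesis by simp
    qed
    then obtain c where "\<forall>x\<in>UNIV. F (-x) + F x = c"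
      using has_field_derivative_zero_constant[of UNIV "\<lambda>x. F (-x) + F x"] by auto
    then have "F (-z) + F z = c" "F (-0) + F 0 = c" by blast+
    then have "F (-z) + F z = F (-0) + F 0" by simp
    then have h: "F (-z) - F 0 = -(F z - F 0)" by (simp add: algebra_simps)
    show ?thesis unfolding c h by (simp only: mult_minus_right)
  qed
  show ?thesis using D odd c by simp
qed

lemma cerf_D: "(cerf has_field_derivative (2 / complex_of_real (sqrt pi) * exp (-(z^2)))) (at z)"
  using cerf_facts by blast
lemma cerf_0: "cerf 0 = 0" using cerf_facts by blast
lemma cerf_odd: "cerf (-z) = - cerf z" using cerf_facts by blast

lemma cerf_D' [derivative_intros]: "(g has_field_derivative g') (at x within s) \<Longrightarrow>
  ((\<lambda>x. cerf (g x)) has_field_derivative (2 / complex_of_real (sqrt pi) * exp (-((g x)^2))) * g') (at x within s)"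
  using DERIV_chain'[of g g' x s cerf] cerf_D by blast

definition f1 :: "complex \<Rightarrow> complex" where "f1 z = (2*z^2 - 1) * exp (z^2)"
definition f1d :: "complex \<Rightarrow> complex" where "f1d z = (4*z^3 + 2*z) * exp (z^2)"
definition f1dd :: "complex \<Rightarrow> complex" where "f1dd z = (8*z^4 + 16*z^2 + 2) * exp (z^2)"

lemma f1_D: "(f1 has_field_derivative f1d z) (at z)"
  unfolding f1_def[abs_def] f1d_def
  by (auto intro!: derivative_eq_intros simp: algebra_simps power2_eq_square power3_eq_cube)

lemma f1d_D: "(f1d has_field_derivative f1dd z) (at z)"
  unfolding f1d_def[abs_def] f1dd_def
  by (auto intro!: derivative_eq_intros simp: algebra_simps power2_eq_square power3_eq_cube power4_eq_xxxx)

lemma Lf1: "z * f1dd z = (2*z^2+2) * f1d z + 2*z*f1 z"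
  unfolding f1_def f1d_def f1dd_def by algebra

lemma f1_0: "f1 0 = -1" unfolding f1_def by simp

definition f2 :: "complex \<Rightarrow> complex" where
  "f2 z = z + complex_of_real (sqrt pi) / 2 * f1 z * cerf z"
definition f2d :: "complex \<Rightarrow> complex" where
  "f2d z = 1 + complex_of_real (sqrt pi) / 2 * f1d z * cerf z + (2*z^2 - 1)"

lemma f2_D: "(f2 has_field_derivative f2d z) (at z)"
proof -
  have p: "complex_of_real (sqrt pi) \<noteq> 0" by simp
  have e: "exp (z^2) * exp (-(z^2)) = 1" by (simp add: exp_minus)
  have "(f2 has_field_derivative 1 + complex_of_real (sqrt pi) / 2 * (f1d z * cerf z + (2 / complex_of_real (sqrt pi) * exp (-(z^2))) * f1 z)) (at z)"
    unfolding f2_def[abs_def]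
    by (auto intro!: derivative_eq_intros f1_D cerf_D simp: algebra_simps)
  moreover have "1 + complex_of_real (sqrt pi) / 2 * (f1d z * cerf z + (2 / complex_of_real (sqrt pi) * exp (-(z^2))) * f1 z) = f2d z"
    unfolding f2d_def f1_def using p e by (simp add: field_simps)
  ultimately show ?thesis by simp
qed

lemma f2_0: "f2 0 = 0" unfolding f2_def by (simp add: cerf_0)

lemma W_f2: "f2d z * f1 z - f2 z * f1d z = -4 * z^2 * exp (z^2)"
  unfolding f2d_def f2_def f1_def f1d_def by algebra

lemma f2_nonzero: "\<exists>z0. f2 z0 \<noteq> 0"
proof (rule ccontr)
  assume "\<not> (\<exists>z0. f2 z0 \<noteq> 0)"
  then have h: "\<And>z0. f2 z0 = 0" by auto
  then have z: "f2 = (\<lambda>_. 0)" by auto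
  have "((\<lambda>_. 0) has_field_derivative f2d 1) (at (1::complex))" using f2_D[of 1] unfolding z .
  then have "f2d 1 = 0" using DERIV_const DERIV_unique by blast
  then have "-4 * 1^2 * exp ((1::complex)^2) = 0" using W_f2[of 1] h[of 1] by simp
  then show False by simp
qed


lemma ode_unique:
  fixes d d1 d2 :: "complex \<Rightarrow> complex"
  assumes D1: "\<And>z. (d has_field_derivative d1 z) (at z)"
      and D2: "\<And>z. (d1 has_field_derivative d2 z) (at z)"
      and L: "\<And>z. z * d2 z = (2*z^2+2) * d1 z + 2*z*d z"
      and d0: "d 0 = 0"
  shows "\<exists>C. \<forall>z. d z = C * f2 z"
proof -
  define W where "W z = d1 z * f1 z - d z * f1d z" for z
  define W' where "W' z = d2 z * f1 z - d z * f1dd z" for z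
  have WD: "(W has_field_derivative W' z) (at z)" for z
  proof -
    have "(W has_field_derivative (d2 z * f1 z + f1d z * d1 z) - (d1 z * f1d z + f1dd z * d z)) (at z)"
      unfolding W_def[abs_def] by (intro DERIV_diff DERIV_mult D1 D2 f1_D f1d_D)
    then show ?thesis unfolding W'_def by (simp add: algebra_simps)
  qed
  have zW: "z * W' z = (2*z^2+2) * W z" for z
    using L[of z] Lf1[of z] unfolding W_def W'_def by algebra
  define V where "V z = W z * exp (-(z^2))" for z
  define V' where "V' z = W' z * exp (-(z^2)) - 2*z*W z*exp (-(z^2))" for z
  have VD: "(V has_field_derivative V' z) (at z)" for z
  proof -
    have E: "((\<lambda>z. exp (-(z^2))) has_field_derivative exp (-(z^2)) * (-(2*z))) (at z)"
      by (auto intro!: derivative_eq_intros)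
    show ?thesis using DERIV_mult[OF WD E] unfolding V_def[abs_def] V'_def
      by (simp add: algebra_simps)
  qed
  have zV: "z * V' z = 2 * V z" for z
    using zW[of z] unfolding V_def V'_def by algebra
  have V0: "V 0 = 0" using zV[of 0] by simp
  have qD: "((\<lambda>z. V z / z^2) has_field_derivative 0) (at z)" if "z \<in> - {0}" for z
  proof -
    have z: "z \<noteq> 0" using that by simp
    have S: "((\<lambda>z. z^2) has_field_derivative 2*z) (at z)"
      by (auto intro!: derivative_eq_intros)
    have "((\<lambda>z. V z / z^2) has_field_derivative (V' z * z^2 - V z * (2*z)) / (z^2 * z^2)) (at z)"
      by (rule DERIV_divide[OF VD S]) (use z in simp)
    moreover have "V' z * z^2 - V z * (2*z) = 0"
      using zV[of z] by (simp add: algebra_simps power2_eq_square)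
    ultimately show ?thesis by simp
  qed
  have conn: "connected (- {0::complex})"
    by (rule connected_punctured_universe) simp
  have cont: "continuous_on (- {0}) (\<lambda>z. V z / z^2)"
    by (rule DERIV_continuous_on[where D="\<lambda>_. 0"]) (use qD in \<open>auto intro: has_field_derivative_at_within\<close>)
  obtain c where c: "\<And>z. z \<in> - {0} \<Longrightarrow> V z / z^2 = c"
    using DERIV_zero_connected_constant[OF conn _ finite.emptyI cont] qD by blast
  have Vc: "V z = c * z^2" for z
  proof (cases "z = 0")
    case True then show ?thesis using V0 by simp
  next
    case False then show ?thesis using c[of z] by (simp add: field_simps)
  qed
  have Wc: "W z = c * z^2 * exp (z^2)" for z
  proof -
    have "exp (-(z^2)) * exp (z^2) = 1" by (simp add: mult_exp_exp)
    then have "W z = V z * exp (z^2)" unfolding V_def by (simp add: mult.assoc)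
    then show ?thesis using Vc[of z] by simp
  qed
  define e where "e z = d z + c/4 * f2 z" for z
  define e1 where "e1 z = d1 z + c/4 * f2d z" for z
  have eD: "(e has_field_derivative e1 z) (at z)" for z
    unfolding e_def[abs_def] e1_def by (intro DERIV_add DERIV_cmult D1 f2_D)
  have We: "e1 z * f1 z - e z * f1d z = 0" for z
    using Wc[of z, unfolded W_def] W_f2[of z] unfolding e_def e1_def by algebra
  define Z where "Z = {z::complex. 2*z^2 - 1 = 0}"
  define a where "a = complex_of_real (sqrt (1/2))"
  have a2: "a^2 = 1/2" unfolding a_def of_real_power[symmetric] by simp
  have "Z \<subseteq> {a, -a}"
  proof
    fix z assume "z \<in> Z"
    then have "2*z^2 - 1 = 0" unfolding Z_def by simp
    then have "(z - a) * (z + a) = 0" using a2 by algebra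
    then have "z - a = 0 \<or> z + a = 0" by simp
    then show "z \<in> {a, -a}" by (auto simp: eq_neg_iff_add_eq_0)
  qed
  then have finZ: "finite Z" by (rule finite_subset) simp
  have f1nz: "f1 z \<noteq> 0" if "z \<notin> Z" for z
    using that unfolding Z_def f1_def by simp
  have openS: "open (UNIV - Z)" using finZ by (simp add: finite_imp_closed open_Diff)
  have connS: "connected (UNIV - Z)"
    by (rule connected_open_delete_finite) (simp_all add: finZ connected_UNIV)
  have rD: "((\<lambda>z. e z / f1 z) has_field_derivative 0) (at z)" if "z \<in> UNIV - Z" for z
  proof -
    have "((\<lambda>z. e z / f1 z) has_field_derivative (e1 z * f1 z - e z * f1d z) / (f1 z * f1 z)) (at z)"
      by (rule DERIV_divide[OF eD f1_D]) (use that f1nz in simp)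
    then show ?thesis unfolding We by simp
  qed
  have contr: "continuous_on (UNIV - Z) (\<lambda>z. e z / f1 z)"
    by (rule DERIV_continuous_on[where D="\<lambda>_. 0"]) (use rD in \<open>auto intro: has_field_derivative_at_within\<close>)
  obtain c2 where c2: "\<And>z. z \<in> UNIV - Z \<Longrightarrow> e z / f1 z = c2"
    using DERIV_zero_connected_constant[OF connS openS finite.emptyI contr] rD by blast
  have "0 \<in> UNIV - Z" unfolding Z_def by simp
  then have "c2 = e 0 / f1 0" using c2 by simp
  also have "\<dots> = 0" unfolding e_def using d0 f2_0 by simp
  finally have eS: "e z = 0" if "z \<in> UNIV - Z" for z
    using c2[OF that] f1nz[of z] that by simp
  have conte: "continuous_on (closure (- Z)) e"
    by (rule DERIV_continuous_on[where D=e1]) (use eD in \<open>auto intro: has_field_derivative_at_within\<close>)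
  have clo: "closure (- Z) = UNIV"
    by (simp add: closure_complement empty_interior_finite finZ)
  have e0: "e z = 0" for z
    by (rule continuous_constant_on_closure[OF conte]) (use eS clo in auto)
  show ?thesis
    by (rule exI[where x="-c/4"]) (use e0 in \<open>auto simp: e_def algebra_simps eq_neg_iff_add_eq_0\<close>)
qed


definition uu :: "complex \<Rightarrow> complex \<Rightarrow> complex" where
  "uu w z = complex_of_real (sqrt pi) / 4 * (2*w^2 - 1) * exp (w^2) * (cerf (z - w) + cerf w - cerf z)"
definition u1 :: "complex \<Rightarrow> complex \<Rightarrow> complex" where
  "u1 w z = (2*w^2 - 1) / 2 * (exp (2*z*w - z^2) - exp (w^2 - z^2))"
definition u2 :: "complex \<Rightarrow> complex \<Rightarrow> complex" where
  "u2 w z = (2*w^2 - 1) / 2 * ((2*w - 2*z) * exp (2*z*w - z^2) + 2*z * exp (w^2 - z^2))"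
definition aa :: "complex \<Rightarrow> complex" where
  "aa w = -(2*w^2 - 1) * exp (w^2) / 2"

definition Hf :: "complex \<Rightarrow> complex \<Rightarrow> complex" where
  "Hf w z = f1 z * uu w z + aa w * z + w/2 * f1 z - (z - w) * exp (2*z*w) / 2"
definition H1 :: "complex \<Rightarrow> complex \<Rightarrow> complex" where
  "H1 w z = f1d z * uu w z + f1 z * u1 w z + aa w + w/2 * f1d z - (1 + 2*w*(z - w)) * exp (2*z*w) / 2"
definition H2 :: "complex \<Rightarrow> complex \<Rightarrow> complex" where
  "H2 w z = f1dd z * uu w z + 2 * f1d z * u1 w z + f1 z * u2 w z + w/2 * f1dd z
     - (4*w + 4*w^2*(z - w)) * exp (2*z*w) / 2"


lemma uu_D: "(uu w has_field_derivative u1 w z) (at z)"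
proof -
  define p where "p = complex_of_real (sqrt pi)"
  have p: "p \<noteq> 0" unfolding p_def by simp
  have E: "((\<lambda>z. cerf (z - w) + cerf w - cerf z) has_field_derivative
      (2 / p * exp (-((z - w)^2))) * 1 - 2 / p * exp (-(z^2))) (at z)"
    unfolding p_def
    by (intro DERIV_diff DERIV_add cerf_D' cerf_D DERIV_const derivative_eq_intros) auto
  have D: "(uu w has_field_derivative p / 4 * (2*w^2 - 1) * exp (w^2) * ((2 / p * exp (-((z - w)^2))) * 1 - 2 / p * exp (-(z^2)))) (at z)"
    unfolding uu_def[abs_def] p_def[symmetric] by (rule DERIV_cmult[OF E])
  have hA: "exp (w^2) * exp (-((z - w)^2)) = exp (2*z*w - z^2)"
    unfolding mult_exp_exp by (rule arg_cong[where f=exp]) (simp add: power2_eq_square algebra_simps)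
  have hB: "exp (w^2) * exp (-(z^2)) = exp (w^2 - z^2)"
    unfolding mult_exp_exp by simp
  have "p / 4 * (2*w^2 - 1) * exp (w^2) * ((2 / p * exp (-((z - w)^2))) * 1 - 2 / p * exp (-(z^2)))
      = (2*w^2 - 1) / 2 * (exp (w^2) * exp (-((z - w)^2)) - exp (w^2) * exp (-(z^2)))"
    using p by (simp add: field_simps)
  also have "\<dots> = u1 w z" unfolding hA hB u1_def ..
  finally have eq: "p / 4 * (2*w^2 - 1) * exp (w^2) * ((2 / p * exp (-((z - w)^2))) * 1 - 2 / p * exp (-(z^2))) = u1 w z" .
  show ?thesis by (subst eq[symmetric]) (rule D)
qed

lemma u1_D: "(u1 w has_field_derivative u2 w z) (at z)"
  unfolding u1_def[abs_def] u2_def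
  by (auto intro!: derivative_eq_intros simp: field_simps)

lemma Hf_D: "(Hf w has_field_derivative H1 w z) (at z)"
  unfolding Hf_def[abs_def] H1_def
  by (auto intro!: derivative_eq_intros f1_D uu_D simp: field_simps)

lemma H1_D: "(H1 w has_field_derivative H2 w z) (at z)"
  unfolding H1_def[abs_def] H2_def
  by (auto intro!: derivative_eq_intros f1_D f1d_D uu_D u1_D simp: field_simps power2_eq_square)

lemma LH: "z * H2 w z - (2*z^2+2) * H1 w z - 2*z * Hf w z = 4*(z*w)^3 * exp (2*z*w)"
proof -
  define X where "X = exp (z^2)"
  define A where "A = exp (2*z*w - z^2)"
  define B where "B = exp (w^2 - z^2)"
  have P: "exp (2*z*w) = X * A" unfolding X_def A_def mult_exp_exp by simp
  have Y: "exp (w^2) = X * B" unfolding X_def B_def mult_exp_exp by simp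
  have "2 * (z * H2 w z - (2*z^2+2) * H1 w z - 2*z * Hf w z) = 2 * (4*(z*w)^3 * exp (2*z*w))"
    unfolding H2_def H1_def Hf_def u1_def u2_def aa_def f1_def f1d_def f1dd_def
    unfolding A_def[symmetric] B_def[symmetric] X_def[symmetric] P Y
    unfolding ring_distribs times_divide_eq_right mult_2_right
    by algebra
  then show ?thesis by (rule mult_left_cancel[THEN iffD1, rotated]) simp
qed

lemma Hf_anti: "Hf w z = - Hf z w"
proof -
  have c: "cerf (w - z) = - cerf (z - w)" using cerf_odd[of "z - w"] by simp
  have e: "exp (2*w*z) = exp (2*z*w)" by (simp add: mult_ac)
  show ?thesis
    unfolding Hf_def uu_def aa_def f1_def c e
    by (simp add: field_simps)
qed

lemma Hf_kappa: "z \<noteq> 0 \<Longrightarrow> w \<noteq> 0 \<Longrightarrow> kappa_lim z w = Hf w z / (z*w)^3"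
  unfolding kappa_lim_def Hf_def uu_def aa_def f1_def exp_add
  apply (simp add: field_simps)
  apply algebra
  done


definition Tk :: "nat \<Rightarrow> complex \<Rightarrow> complex \<Rightarrow> complex" where
  "Tk k z w = (\<Sum>l\<le>k. cc k l * (z^(2*k+1) * w^(2*l) - w^(2*k+1) * z^(2*l)))"

lemma kappaN_T: "kappaN N z w = (\<Sum>k<N. Tk k z w)"
  unfolding kappaN_def GN_alt Tk_def sum_subtractf[symmetric]
  by (simp add: right_diff_distrib mult.assoc)

lemma cc_nat_bound: "(2*k+3)*(2*l+2)*2^(k+l+2) * fact (k+1) \<le> 2 * (dfact (2*k+4) * dfact (2*l+3))"
proof -
  have d: "dfact (2*k+4) = 2^(k+2) * ((k+2) * fact (k+1))"
  proof -
    have "dfact (2*k+4) = dfact (2*(k+2))" by (rule arg_cong[where f=dfact]) simp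
    also have "\<dots> = 2^(k+2) * fact (k+2)" by (rule dfact_even)
    also have "fact (k+2) = (k+2) * (fact (k+1) :: nat)" by (simp add: algebra_simps)
    finally show ?thesis .
  qed
  have "(2*k+3)*(2*l+2)*2^(k+l+2) * fact (k+1) = ((2*k+3) * ((2*l+2)*2^l)) * (2^(k+2) * fact (k+1))"
    by (simp add: power_add algebra_simps)
  also have "\<dots> \<le> ((2*(k+2)) * dfact (2*l+3)) * (2^(k+2) * fact (k+1))"
    by (intro mult_mono dfact_odd_bound) simp_all
  also have "\<dots> = 2 * (dfact (2*k+4) * dfact (2*l+3))"
    unfolding d by (simp only: mult_ac)
  finally show ?thesis .
qed

lemma cc_bound: "norm (cc k l) \<le> 2 / fact (k+1)"
proof -
  have b: "real (dfact (2*k+4) * dfact (2*l+3)) > 0" using dfact_pos by simp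
  have f: "(fact (k+1) :: real) > 0" by simp
  have h: "real ((2*k+3)*(2*l+2)*2^(k+l+2)) * fact (k+1) \<le> 2 * real (dfact (2*k+4) * dfact (2*l+3))"
  proof -
    have "real ((2*k+3)*(2*l+2)*2^(k+l+2) * fact (k+1)) \<le> real (2 * (dfact (2*k+4) * dfact (2*l+3)))"
      using cc_nat_bound by (simp only: of_nat_le_iff)
    then show ?thesis by (simp only: of_nat_mult of_nat_fact)
  qed
  have "norm (cc k l) = real ((2*k+3)*(2*l+2)*2^(k+l+2)) / real (dfact (2*k+4) * dfact (2*l+3))"
    unfolding cc_def norm_divide norm_of_nat ..
  also have "\<dots> \<le> 2 / fact (k+1)"
    using b f h by (simp add: field_simps)
  finally show ?thesis .
qed

lemma mono_bound: "R \<ge> 1 \<Longrightarrow> norm (z::complex) \<le> R \<Longrightarrow> norm (w::complex) \<le> R \<Longrightarrow> a + b \<le> n \<Longrightarrow>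
   norm (z^a * w^b) \<le> R^n"
proof -
  assume R: "R \<ge> 1" and z: "norm z \<le> R" and w: "norm w \<le> R" and ab: "a + b \<le> n"
  have "norm (z^a * w^b) = norm z ^ a * norm w ^ b" by (simp add: norm_mult norm_power)
  also have "\<dots> \<le> R^a * R^b" by (intro mult_mono power_mono) (use z w R in auto)
  also have "\<dots> = R^(a+b)" by (simp add: power_add)
  also have "\<dots> \<le> R^n" by (rule power_increasing[OF ab]) (use R in simp)
  finally show ?thesis .
qed

lemma gen_arith: "(K::real) \<noteq> 0 \<Longrightarrow> F \<noteq> 0 \<Longrightarrow> K * (2 / (K * F) * (2 * (R * Q))) = 4 * R * Q / F"
  by (simp add: field_simps)

lemma T_bound: assumes R: "R \<ge> 1" and z: "norm z \<le> R" and w: "norm w \<le> R"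
  shows "norm (Tk k z w) \<le> 4 * R * (R^4)^k / fact k"
proof -
  have t: "norm (cc k l * (z^(2*k+1) * w^(2*l) - w^(2*k+1) * z^(2*l))) \<le> 2 / fact (k+1) * (2 * R^(4*k+1))"
    if "l \<in> {..k}" for l
  proof -
    have l: "l \<le> k" using that by simp
    have "norm (z^(2*k+1) * w^(2*l) - w^(2*k+1) * z^(2*l)) \<le> norm (z^(2*k+1) * w^(2*l)) + norm (w^(2*k+1) * z^(2*l))"
      by (rule norm_triangle_ineq4)
    also have "\<dots> \<le> R^(4*k+1) + R^(4*k+1)"
      by (rule add_mono[OF mono_bound[OF R z w, of "2*k+1" "2*l" "4*k+1"] mono_bound[OF R w z, of "2*k+1" "2*l" "4*k+1"]]) (use l in simp_all)
    finally have "norm (z^(2*k+1) * w^(2*l) - w^(2*k+1) * z^(2*l)) \<le> 2 * R^(4*k+1)" by simp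
    then show ?thesis unfolding norm_mult
      by (intro mult_mono cc_bound) auto
  qed
  have "norm (Tk k z w) \<le> (\<Sum>l\<le>k. 2 / fact (k+1) * (2 * R^(4*k+1)))"
    unfolding Tk_def by (rule order_trans[OF norm_sum sum_mono[OF t]])
  also have "\<dots> = real (k+1) * (2 / fact (k+1) * (2 * R^(4*k+1)))" by simp
  also have "\<dots> = 4 * R * (R^4)^k / fact k"
  proof -
    have e1: "(fact (k+1) :: real) = real (k+1) * fact k" by simp
    have e2: "R^(4*k+1) = R * (R^4)^k" by (simp add: power_add power_mult)
    have k: "real (k+1) \<noteq> 0" by simp
    have f: "(fact k :: real) \<noteq> 0" by simp
    show ?thesis unfolding e1 e2 using gen_arith[OF k f] .
  qed
  finally show ?thesis .
qed

lemma unif_gen: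
  assumes R: "R \<ge> 1"
    and z: "\<And>x. x \<in> X \<Longrightarrow> norm (fz x) \<le> R" and w: "\<And>x. x \<in> X \<Longrightarrow> norm (fw x) \<le> R"
    and g: "\<And>x. x \<in> X \<Longrightarrow> norm (g x :: complex) \<le> B"
  shows "uniform_limit X (\<lambda>N x. \<Sum>k<N. g x * Tk k (fz x) (fw x))
            (\<lambda>x. suminf (\<lambda>k. g x * Tk k (fz x) (fw x))) sequentially"
proof (rule Weierstrass_m_test)
  show "norm (g x * Tk k (fz x) (fw x)) \<le> B * (4 * R * ((R^4)^k / fact k))" if "x \<in> X" for k x
  proof -
    have "norm (g x) \<ge> 0" by simp
    then have "B \<ge> 0" using g[OF that] by linarith
    have "norm (g x * Tk k (fz x) (fw x)) = norm (g x) * norm (Tk k (fz x) (fw x))" by (rule norm_mult)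
    also have "\<dots> \<le> B * (4 * R * (R^4)^k / fact k)"
      by (intro mult_mono g T_bound R z w that) (use \<open>B \<ge> 0\<close> in auto)
    finally show ?thesis by simp
  qed
  have "summable (\<lambda>k. inverse (fact k) * (R^4)^k)" by (rule summable_exp)
  then have "summable (\<lambda>k. (R^4)^k / fact k)" by (simp add: field_simps)
  then show "summable (\<lambda>k. B * (4 * R * ((R^4)^k / fact k)))"
    by (intro summable_mult)
qed


lemma Tk_anti: "Tk k w z = - Tk k z w"
  unfolding Tk_def sum_negf[symmetric] by (rule sum.cong) (auto simp: algebra_simps)

lemma Tk_summable: "summable (\<lambda>k. Tk k z w)"
proof -
  define R where "R = max 1 (max (norm z) (norm w))"
  have R: "R \<ge> 1" "norm z \<le> R" "norm w \<le> R" unfolding R_def by auto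
  have "summable (\<lambda>k. inverse (fact k) * (R^4)^k)" by (rule summable_exp)
  then have "summable (\<lambda>k. 4 * R * ((R^4)^k / fact k))" by (intro summable_mult) (simp add: field_simps)
  then show ?thesis
    by (rule summable_comparison_test[rotated]) (use T_bound[OF R] in auto)
qed

definition Kf :: "complex \<times> complex \<Rightarrow> complex" where
  "Kf p = (\<Sum>k. Tk k (fst p) (snd p))"

lemma Kf_anti: "Kf (w, z) = - Kf (z, w)"
proof -
  have e: "(\<lambda>k. Tk k w z) = (\<lambda>k. - Tk k z w)" by (rule ext) (rule Tk_anti)
  show ?thesis unfolding Kf_def fst_conv snd_conv e by (rule suminf_minus[OF Tk_summable])
qed

lemma unif_K: assumes "compact S"
  shows "uniform_limit S (\<lambda>N p. kappaN N (fst p) (snd p)) Kf sequentially"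
proof -
  obtain B where B: "\<And>x. x \<in> S \<Longrightarrow> norm x \<le> B"
    using compact_imp_bounded[OF assms] bounded_iff by blast
  define R where "R = max 1 B"
  have U: "uniform_limit S (\<lambda>N x. \<Sum>k<N. 1 * Tk k (fst x) (snd x)) (\<lambda>x. suminf (\<lambda>k. 1 * Tk k (fst x) (snd x))) sequentially"
  proof (rule unif_gen)
    show "norm (fst x) \<le> R" if "x \<in> S" for x
      using norm_fst_le[of "fst x" "snd x"] B[OF that] unfolding R_def by simp
    show "norm (snd x) \<le> R" if "x \<in> S" for x
      using norm_snd_le[of "snd x" "fst x"] B[OF that] unfolding R_def by simp
  qed (auto simp: R_def)
  have e1: "(\<lambda>N x. \<Sum>k<N. 1 * Tk k (fst x) (snd x)) = (\<lambda>N p. kappaN N (fst p) (snd p))"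
    by (simp add: kappaN_T)
  have e2: "(\<lambda>x. suminf (\<lambda>k. 1 * Tk k (fst x) (snd x))) = Kf"
    by (simp add: Kf_def fun_eq_iff)
  show ?thesis using U unfolding e1 e2 .
qed

lemma cont_K: "continuous_on UNIV Kf"
proof -
  have "isCont Kf p" for p
  proof -
    have "continuous_on (cball p 1) Kf"
    proof (rule uniform_limit_theorem[OF _ unif_K])
      show "\<forall>\<^sub>F n in sequentially. continuous_on (cball p 1) (\<lambda>p. kappaN n (fst p) (snd p))"
        unfolding kappaN_T Tk_def by (intro always_eventually allI continuous_intros)
    qed auto
    then show ?thesis by (rule continuous_on_interior) simp
  qed
  then show ?thesis by (simp add: continuous_at_imp_continuous_on)
qed

definition Phi :: "complex \<Rightarrow> complex \<Rightarrow> complex" where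
  "Phi w z = (z*w)^3 * Kf (z, w)"

lemma kappahat_holo: "(\<lambda>z. kappahatN N z w) holomorphic_on A"
  unfolding kappahat_alt by (intro holomorphic_intros)

lemma unif_Phi: assumes R: "R \<ge> 1" "norm w \<le> R"
  shows "uniform_limit (cball 0 R) (\<lambda>N z. kappahatN N z w) (Phi w) sequentially"
proof -
  have U: "uniform_limit (cball 0 R) (\<lambda>N x. \<Sum>k<N. (x*w)^3 * Tk k x w) (\<lambda>x. suminf (\<lambda>k. (x*w)^3 * Tk k x w)) sequentially"
  proof (rule unif_gen[where B="(R*R)^3"])
    show "norm ((x*w)^3) \<le> (R*R)^3" if "x \<in> cball 0 R" for x
    proof -
      have "norm x \<le> R" using that by simp
      then show ?thesis unfolding norm_power norm_mult
        by (intro power_mono mult_mono) (use R in auto)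
    qed
  qed (use R in auto)
  have e1: "(\<lambda>N x. \<Sum>k<N. (x*w)^3 * Tk k x w) = (\<lambda>N z. kappahatN N z w)"
    by (simp add: kappahatN_def kappaN_T sum_distrib_left fun_eq_iff)
  have e2: "(\<lambda>x. suminf (\<lambda>k. (x*w)^3 * Tk k x w)) = Phi w"
    by (simp add: fun_eq_iff Phi_def Kf_def suminf_mult[OF Tk_summable])
  show ?thesis using U unfolding e1 e2 .
qed

lemma Phi_holo: "Phi w holomorphic_on UNIV"
  unfolding holomorphic_on_def
proof
  fix z :: complex
  define R where "R = max 1 (max (norm w) (norm z + 1))"
  have R: "R \<ge> 1" "norm w \<le> R" "norm z < R" unfolding R_def by auto
  obtain "continuous_on (cball 0 R) (Phi w)" "Phi w holomorphic_on ball 0 R"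
  proof (rule holomorphic_uniform_limit[OF _ unif_Phi[OF R(1,2)]])
    show "\<forall>\<^sub>F n in sequentially. continuous_on (cball 0 R) (\<lambda>z. kappahatN n z w) \<and> (\<lambda>z. kappahatN n z w) holomorphic_on ball 0 R"
      by (intro always_eventually allI conjI holomorphic_on_imp_continuous_on kappahat_holo)
  qed auto
  then have "Phi w field_differentiable at z"
    using R(3) by (intro holomorphic_on_imp_differentiable_at[of _ "ball 0 R"]) auto
  then show "Phi w field_differentiable at z within UNIV" by simp
qed

lemma deriv_lim: assumes m: "m \<le> 2"
  shows "(\<lambda>N. (deriv ^^ m) (\<lambda>z. kappahatN N z w) z) \<longlonglongrightarrow> (deriv ^^ m) (Phi w) z"
proof -
  define R where "R = max 1 (max (norm w) (norm z + 1))"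
  have R: "R \<ge> 1" "norm w \<le> R" "norm z < R" unfolding R_def by auto
  have U: "uniform_limit (ball 0 R) (\<lambda>N z. kappahatN N z w) (Phi w) sequentially"
    by (rule uniform_limit_on_subset[OF unif_Phi[OF R(1,2)]]) auto
  show ?thesis
    by (rule higher_deriv_complex_uniform_limit[OF U]) (use R in \<open>auto intro!: always_eventually kappahat_holo\<close>)
qed

lemma exp_partial: "(\<lambda>N. \<Sum>k<2*N. x^k / of_nat (fact k)) \<longlonglongrightarrow> exp (x::complex)"
proof -
  have "(\<lambda>n. x^n / of_nat (fact n)) sums exp x"
    using exp_converges[of x] by (simp add: scaleR_conv_of_real divide_inverse mult.commute)
  then have "(\<lambda>n. \<Sum>k<n. x^k / of_nat (fact k)) \<longlonglongrightarrow> exp x" by (simp add: sums_def)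
  from LIMSEQ_subseq_LIMSEQ[OF this, of "\<lambda>n. 2*n"] show ?thesis
    by (simp add: strict_mono_def o_def)
qed


lemma nat_poly: "N * (2 * (2*N+4) * (2*N+1)) \<le> 16 * 4^N * (N+1)"
proof -
  have a: "N \<le> 2^N" using less_exp[of N] by simp
  have b: "2*N+4 \<le> 4*2^N" using less_exp[of "N+1"] by simp
  have c: "2*N+1 \<le> 2*(N+1)" by simp
  have "N * (2 * (2*N+4) * (2*N+1)) \<le> 2^N * (2 * (4*2^N) * (2*(N+1)))"
    by (intro mult_mono a b c) simp_all
  also have "\<dots> = 16 * (2^N*2^N) * (N+1)" by (simp add: algebra_simps)
  also have "(2::nat)^N*2^N = 4^N" by (simp add: power_mult_distrib[symmetric])
  finally show ?thesis .
qed

lemma rho_norm: "norm (rho N l) \<le> 2 * real ((2*N+4)*(2*N+1)) / fact (N+1)"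
proof -
  have "norm (rho N l) = norm (cc N l) * real ((2*N+4)*(2*N+1))"
    unfolding c1[symmetric] norm_mult norm_of_nat ..
  also have "\<dots> \<le> 2 / fact (N+1) * real ((2*N+4)*(2*N+1))"
    by (intro mult_right_mono cc_bound) simp
  finally show ?thesis by simp
qed

lemma div_aux: "(F::real) > 0 \<Longrightarrow> K > 0 \<Longrightarrow> a \<le> b * K \<Longrightarrow> a / (K * F) \<le> b / F"
  by (simp add: field_simps)

lemma R_bound: assumes R: "R \<ge> 1" and z: "norm z \<le> R" and w: "norm w \<le> R"
  shows "norm (\<Sum>l<N. rho N l * z^(2*N+3) * w^(2*l+3)) \<le> 16 * R^6 * ((4*R^4)^N / fact N)"
proof -
  have t: "norm (rho N l * z^(2*N+3) * w^(2*l+3)) \<le> 2 * real ((2*N+4)*(2*N+1)) / fact (N+1) * R^(4*N+6)"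
    if "l \<in> {..<N}" for l
  proof -
    have "norm (rho N l * z^(2*N+3) * w^(2*l+3)) = norm (rho N l) * norm (z^(2*N+3) * w^(2*l+3))"
      by (simp add: norm_mult mult.assoc)
    also have "\<dots> \<le> 2 * real ((2*N+4)*(2*N+1)) / fact (N+1) * R^(4*N+6)"
      by (intro mult_mono rho_norm mono_bound[OF R z w]) (use that in auto)
    finally show ?thesis .
  qed
  have "norm (\<Sum>l<N. rho N l * z^(2*N+3) * w^(2*l+3)) \<le> (\<Sum>l<N. 2 * real ((2*N+4)*(2*N+1)) / fact (N+1) * R^(4*N+6))"
    by (rule order_trans[OF norm_sum sum_mono[OF t]])
  also have "\<dots> = (real N * (2 * real ((2*N+4)*(2*N+1)))) / (real (N+1) * fact N) * R^(4*N+6)"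
    by (simp add: algebra_simps)
  also have "\<dots> \<le> (16 * 4^N) / fact N * R^(4*N+6)"
  proof (rule mult_right_mono)
    have "real (N * (2 * (2*N+4) * (2*N+1))) \<le> real (16 * 4^N * (N+1))"
      using nat_poly by (simp only: of_nat_le_iff)
    then have "real N * (2 * real ((2*N+4)*(2*N+1))) \<le> (16 * 4^N) * real (N+1)"
      by (simp add: algebra_simps)
    then show "(real N * (2 * real ((2*N+4)*(2*N+1)))) / (real (N+1) * fact N) \<le> (16 * 4^N) / fact N"
      by (intro div_aux) auto
  qed (use R in simp)
  also have "\<dots> = 16 * R^6 * ((4*R^4)^N / fact N)"
  proof -
    have e1: "R^(4*N+6) = R^6 * (R^4)^N" by (simp add: power_add power_mult)
    have e2: "(4*R^4)^N = 4^N * (R^4)^N" by (simp add: power_mult_distrib)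
    show ?thesis unfolding e1 e2 by (simp add: field_simps)
  qed
  finally show ?thesis .
qed

lemma R_lim: "(\<lambda>N. \<Sum>l<N. rho N l * z^(2*N+3) * w^(2*l+3)) \<longlonglongrightarrow> 0"
proof -
  define R where "R = max 1 (max (norm z) (norm w))"
  have R: "R \<ge> 1" "norm z \<le> R" "norm w \<le> R" unfolding R_def by auto
  have "summable (\<lambda>n. inverse (fact n) * (4*R^4)^n)" by (rule summable_exp)
  then have "(\<lambda>n. inverse (fact n) * (4*R^4)^n) \<longlonglongrightarrow> 0" by (rule summable_LIMSEQ_zero)
  then have "(\<lambda>n. 16 * R^6 * ((4*R^4)^n / fact n)) \<longlonglongrightarrow> 0"
    by (intro tendsto_mult_right_zero) (simp add: field_simps)
  then show ?thesis
    by (rule Lim_null_comparison[rotated]) (use R_bound[OF R] in auto)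
qed

lemma Rs_alt: "1/2 * (of_nat ((2*N+1)*(2*N+3)) / of_nat (dfact (2*N+2)))
              * (complex_of_real (sqrt 2) * z) ^ (2*N+3)
              * (\<Sum>l<N. of_nat (2*l+2) / of_nat (dfact (2*l+3))
                   * (complex_of_real (sqrt 2) * w) ^ (2*l+3))
      = (\<Sum>l<N. rho N l * z^(2*N+3) * w^(2*l+3))"
  unfolding sum_distrib_left R_term ..

lemma LPhi: "z * deriv (\<lambda>z. deriv (Phi w) z) z - (2*z^2+2) * deriv (Phi w) z - 2*z * Phi w z
   = 4*(z*w)^3 * exp (2*z*w)"
proof -
  define R where "R = max 1 (max (norm w) (norm z))"
  have R: "R \<ge> 1" "norm w \<le> R" "z \<in> cball 0 R" unfolding R_def by auto
  have p0: "(\<lambda>N. kappahatN N z w) \<longlonglongrightarrow> Phi w z"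
    by (rule tendsto_uniform_limitI[OF unif_Phi[OF R(1,2)] R(3)])
  have p1: "(\<lambda>N. deriv (\<lambda>z. kappahatN N z w) z) \<longlonglongrightarrow> deriv (Phi w) z"
    using deriv_lim[of 1 w z] by simp
  have p2: "(\<lambda>N. deriv (\<lambda>z. deriv (\<lambda>z. kappahatN N z w) z) z) \<longlonglongrightarrow> deriv (\<lambda>z. deriv (Phi w) z) z"
    using deriv_lim[of 2 w z] by (simp add: numeral_2_eq_2)
  have L1: "(\<lambda>N. z * deriv (\<lambda>z. deriv (\<lambda>z. kappahatN N z w) z) z - (2*z^2+2) * deriv (\<lambda>z. kappahatN N z w) z
      - 2*z * kappahatN N z w) \<longlonglongrightarrow> z * deriv (\<lambda>z. deriv (Phi w) z) z - (2*z^2+2) * deriv (Phi w) z - 2*z * Phi w z"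
    by (intro tendsto_intros p0 p1 p2)
  have L2: "(\<lambda>N. z * deriv (\<lambda>z. deriv (\<lambda>z. kappahatN N z w) z) z - (2*z^2+2) * deriv (\<lambda>z. kappahatN N z w) z
      - 2*z * kappahatN N z w) \<longlonglongrightarrow> 4*(z*w)^3 * exp (2*z*w) - 0"
    unfolding part1 Rs_alt
    by (intro tendsto_intros exp_partial R_lim)
  show ?thesis using LIMSEQ_unique[OF L1 L2] by simp
qed

lemma Phi_D: "(Phi w has_field_derivative deriv (Phi w) z) (at z)"
  by (rule holomorphic_derivI[OF Phi_holo open_UNIV]) simp

lemma Phi_DD: "(deriv (Phi w) has_field_derivative deriv (deriv (Phi w)) z) (at z)"
  by (rule holomorphic_derivI[OF holomorphic_deriv[OF Phi_holo open_UNIV] open_UNIV]) simp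

lemma Hf_0: "Hf w 0 = 0"
  unfolding Hf_def uu_def by (simp add: cerf_odd cerf_0 f1_0)

lemma delta_form: "\<exists>C. \<forall>z. Phi w z - Hf w z = C * f2 z"
proof (rule ode_unique[of "\<lambda>z. Phi w z - Hf w z" "\<lambda>z. deriv (Phi w) z - H1 w z" "\<lambda>z. deriv (deriv (Phi w)) z - H2 w z"])
  show "((\<lambda>z. Phi w z - Hf w z) has_field_derivative deriv (Phi w) z - H1 w z) (at z)" for z
    by (intro DERIV_diff Phi_D Hf_D)
  show "((\<lambda>z. deriv (Phi w) z - H1 w z) has_field_derivative deriv (deriv (Phi w)) z - H2 w z) (at z)" for z
    by (intro DERIV_diff Phi_DD H1_D)
  show "z * (deriv (deriv (Phi w)) z - H2 w z) = (2*z^2+2) * (deriv (Phi w) z - H1 w z) + 2*z*(Phi w z - Hf w z)" for z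
    using LPhi[of z w] LH[of z w] by algebra
  show "Phi w 0 - Hf w 0 = 0" by (simp add: Phi_def Hf_0)
qed

lemma Phi_anti: "Phi z w = - Phi w z"
  unfolding Phi_def Kf_anti[of w z] by (simp add: mult.commute)

lemma Phi_Hf: "Phi w z = Hf w z"
proof -
  define D where "D z w = Phi w z - Hf w z" for z w
  have anti: "D z w = - D w z" for z w unfolding D_def using Phi_anti[of z w] Hf_anti[of z w] by simp
  have form: "\<exists>C. \<forall>z. D z w = C * f2 z" for w unfolding D_def by (rule delta_form)
  obtain z0 where z0: "f2 z0 \<noteq> 0" using f2_nonzero by blast
  have s1: "D z z0 = 0" for z
  proof -
    obtain C where C: "\<And>z. D z z0 = C * f2 z" using form[of z0] by blast
    have "D z0 z0 = 0" using anti[of z0 z0] by simp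
    then have "C = 0" using C[of z0] z0 by simp
    then show ?thesis using C by simp
  qed
  obtain C where C: "\<And>z. D z w = C * f2 z" using form[of w] by blast
  have "D z0 w = 0" using anti[of z0 w] s1[of w] by simp
  then have "C = 0" using C[of z0] z0 by simp
  then have "D z w = 0" using C by simp
  then show ?thesis unfolding D_def by simp
qed

lemma K_lim: "z \<noteq> 0 \<Longrightarrow> w \<noteq> 0 \<Longrightarrow> Kf (z, w) = kappa_lim z w"
  unfolding Hf_kappa Phi_Hf[symmetric] Phi_def by simp

theorem proposition3p1:
  shows "(\<forall>N::nat. N \<ge> 1 \<longrightarrow> (\<forall>z w :: complex.
            z * deriv (\<lambda>z. deriv (\<lambda>z. kappahatN N z w) z) z
            - (2*z^2 + 2) * deriv (\<lambda>z. kappahatN N z w) z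
            - 2 * z * kappahatN N z w
          = 4 * (z*w)^3 * (\<Sum>k<2*N. (2*z*w)^k / of_nat (fact k))
            - 1/2 * (of_nat ((2*N+1) * (2*N+3)) / of_nat (dfact (2*N+2)))
              * (complex_of_real (sqrt 2) * z) ^ (2*N+3)
              * (\<Sum>l<N. of_nat (2*l+2) / of_nat (dfact (2*l+3))
                   * (complex_of_real (sqrt 2) * w) ^ (2*l+3))))
       \<and> (\<exists>K :: complex \<times> complex \<Rightarrow> complex.
            continuous_on UNIV K
            \<and> (\<forall>z w. z \<noteq> 0 \<longrightarrow> w \<noteq> 0 \<longrightarrow> K (z, w) = kappa_lim z w)
            \<and> (\<forall>S. compact S \<longrightarrow>
                 uniform_limit S (\<lambda>N p. kappaN N (fst p) (snd p)) K sequentially))"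
proof
  show "\<forall>N::nat. N \<ge> 1 \<longrightarrow> (\<forall>z w :: complex.
            z * deriv (\<lambda>z. deriv (\<lambda>z. kappahatN N z w) z) z
            - (2*z^2 + 2) * deriv (\<lambda>z. kappahatN N z w) z
            - 2 * z * kappahatN N z w
          = 4 * (z*w)^3 * (\<Sum>k<2*N. (2*z*w)^k / of_nat (fact k))
            - 1/2 * (of_nat ((2*N+1) * (2*N+3)) / of_nat (dfact (2*N+2)))
              * (complex_of_real (sqrt 2) * z) ^ (2*N+3)
              * (\<Sum>l<N. of_nat (2*l+2) / of_nat (dfact (2*l+3))
                   * (complex_of_real (sqrt 2) * w) ^ (2*l+3)))"
    using part1 by blast
  show "\<exists>K :: complex \<times> complex \<Rightarrow> complex.
            continuous_on UNIV K
            \<and> (\<forall>z w. z \<noteq> 0 \<longrightarrow> w \<noteq> 0 \<longrightarrow> K (z, w) = kappa_lim z w)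
            \<and> (\<forall>S. compact S \<longrightarrow>
                 uniform_limit S (\<lambda>N p. kappaN N (fst p) (snd p)) K sequentially)"
    using cont_K K_lim unif_K by blast
qed


end
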